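(* Let $G$ be a connected graph, $X$ a minimum vertex cover of $G$, and $\ell,d$ integers. Suppose some vertex $x^\circ\in X$ is adjacent to a pendant vertex (a vertex of degree $1$). Suppose there are subsets $X_s\subseteq X$ and $Y_s\subseteq V(G)\setminus X$ such that (i) $(X\setminus X_s)\cup Y_s$ is a vertex cover of $G$, (ii) $\mathrm{rank}((X\setminus X_s)\cup Y_s)\ge \ell$, and (iii) $|Y_s|-|X_s|\le \ell-d$. Then there are subsets $X'_s\subseteq X$ and $Y'_s\subseteq V(G)\setminus X$ satisfying (i), (ii), (iii) (with $X_s,Y_s$ replaced by $X'_s,Y'_s$) and additionally $x^\circ\notin X'_s$.
   Context: All graphs are finite, simple and undirected. $\mathrm{rank}(H)$ is $|V(H)|$ minus the number of connected components of $H$, and for $S\subseteq V(G)$, $\mathrm{rank}(S):=\mathrm{rank}(G[S])$. *)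

theory Defs
  imports Main
begin

definition simple_graph :: "'a set \<Rightarrow> 'a set set \<Rightarrow> bool" where
  "simple_graph V E \<longleftrightarrow> finite V \<and> (\<forall>e\<in>E. e \<subseteq> V \<and> card e = 2)"

definition adj_in :: "'a set set \<Rightarrow> 'a set \<Rightarrow> ('a \<times> 'a) set" where
  "adj_in E S = {(u, v). u \<in> S \<and> v \<in> S \<and> {u, v} \<in> E}"

definition connected_graph :: "'a set \<Rightarrow> 'a set set \<Rightarrow> bool" where
  "connected_graph V E \<longleftrightarrow> V \<noteq> {} \<and> (\<forall>u\<in>V. \<forall>v\<in>V. (u, v) \<in> (adj_in E V)\<^sup>*)"

definition num_components :: "'a set set \<Rightarrow> 'a set \<Rightarrow> nat" where
  "num_components E S = card (S // ((adj_in E S)\<^sup>*))"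

definition rank_of :: "'a set set \<Rightarrow> 'a set \<Rightarrow> nat" where
  "rank_of E S = card S - num_components E S"

definition vertex_cover :: "'a set \<Rightarrow> 'a set set \<Rightarrow> 'a set \<Rightarrow> bool" where
  "vertex_cover V E C \<longleftrightarrow> C \<subseteq> V \<and> (\<forall>e\<in>E. e \<inter> C \<noteq> {})"

definition min_vertex_cover :: "'a set \<Rightarrow> 'a set set \<Rightarrow> 'a set \<Rightarrow> bool" where
  "min_vertex_cover V E X \<longleftrightarrow> vertex_cover V E X \<and>
     (\<forall>C. vertex_cover V E C \<longrightarrow> card X \<le> card C)"

definition degree :: "'a set set \<Rightarrow> 'a \<Rightarrow> nat" where
  "degree E v = card {u. {u, v} \<in> E}"

end

theory Submission
  imports Defs
begin

lemma comp_le: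
  assumes fin: "finite S" and pS: "p \<in> S" and xS: "x \<notin> S"
    and deg: "\<And>u. {u, p} \<in> E \<Longrightarrow> u = x"
  shows "num_components E ((S - {p}) \<union> {x}) \<le> num_components E S"
proof -
  define S' where "S' = (S - {p}) \<union> {x}"
  define R where "R = adj_in E S"
  define R' where "R' = adj_in E S'"
  have Rp: "a \<noteq> p \<and> b \<noteq> p" if "(a,b) \<in> R" for a b
  proof -
    have ab: "a \<in> S" "b \<in> S" "{a,b} \<in> E" using that by (auto simp: R_def adj_in_def)
    show ?thesis
    proof
      show "a \<noteq> p" using ab deg[of b] xS by (auto simp: insert_commute)
      show "b \<noteq> p" using ab deg[of a] xS by auto
    qed
  qed
  have RR: "R \<subseteq> R'"
  proof
    fix z assume "z \<in> R"
    then obtain a b where z: "z = (a,b)" "(a,b) \<in> R" by (cases z) auto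
    with Rp[of a b] show "z \<in> R'" by (auto simp: R_def R'_def adj_in_def S'_def)
  qed
  hence RR': "R\<^sup>* \<subseteq> R'\<^sup>*" by (rule rtrancl_mono)
  have np: "(a,p) \<notin> R\<^sup>*" if "a \<noteq> p" for a
  proof
    assume "(a,p) \<in> R\<^sup>*"
    then show False using that Rp by (cases rule: rtranclE) auto
  qed
  define g where "g C = (if p \<in> C then R'\<^sup>* `` {x} else R'\<^sup>* `` C)" for C
  have sub: "S' // R'\<^sup>* \<subseteq> g ` (S // R\<^sup>*)"
  proof
    fix D assume "D \<in> S' // R'\<^sup>*"
    then obtain a where a: "a \<in> S'" "D = R'\<^sup>* `` {a}" by (auto simp: quotient_def)
    show "D \<in> g ` (S // R\<^sup>*)"
    proof (cases "a = x")
      case True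
      have "g (R\<^sup>* `` {p}) = D" using True a by (auto simp: g_def)
      moreover have "R\<^sup>* `` {p} \<in> S // R\<^sup>*" using pS by (auto simp: quotient_def)
      ultimately show ?thesis by blast
    next
      case False
      hence aS: "a \<in> S" "a \<noteq> p" using a by (auto simp: S'_def)
      define C where "C = R\<^sup>* `` {a}"
      have "p \<notin> C" using np aS by (auto simp: C_def)
      moreover have "R'\<^sup>* `` C = D"
      proof
        show "R'\<^sup>* `` C \<subseteq> D" using RR' a(2) by (auto simp: C_def intro: rtrancl_trans)
        show "D \<subseteq> R'\<^sup>* `` C" using a(2) by (auto simp: C_def)
      qed
      ultimately have "g C = D" by (simp add: g_def)
      moreover have "C \<in> S // R\<^sup>*" using aS by (auto simp: C_def quotient_def)
      ultimately show ?thesis by blast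
    qed
  qed
  have finq: "finite (S // R\<^sup>*)" using fin by (simp add: quotient_def)
  have "card (S' // R'\<^sup>*) \<le> card (g ` (S // R\<^sup>*))"
    using sub finq by (intro card_mono) auto
  also have "\<dots> \<le> card (S // R\<^sup>*)" using finq by (rule card_image_le)
  finally show ?thesis by (simp add: num_components_def S'_def R'_def R_def)
qed


theorem lemma2:
  fixes V :: "'a set" and E :: "'a set set" and X :: "'a set"
    and x0 :: 'a and l d :: int
  assumes "simple_graph V E"
    and "connected_graph V E"
    and "min_vertex_cover V E X"
    and "x0 \<in> X"
    and "\<exists>p \<in> V. {x0, p} \<in> E \<and> degree E p = 1"
    and "Xs \<subseteq> X" and "Ys \<subseteq> V - X"
    and "vertex_cover V E ((X - Xs) \<union> Ys)"
    and "int (rank_of E ((X - Xs) \<union> Ys)) \<ge> l"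
    and "int (card Ys) - int (card Xs) \<le> l - d"
  shows "\<exists>Xs' Ys'. Xs' \<subseteq> X \<and> Ys' \<subseteq> V - X
           \<and> vertex_cover V E ((X - Xs') \<union> Ys')
           \<and> int (rank_of E ((X - Xs') \<union> Ys')) \<ge> l
           \<and> int (card Ys') - int (card Xs') \<le> l - d
           \<and> x0 \<notin> Xs'"
proof (cases "x0 \<in> Xs")
  case False
  then show ?thesis using assms by blast
next
  case True
  note sg = assms(1)[unfolded simple_graph_def]
  have finV: "finite V" using sg by blast
  have XV: "X \<subseteq> V" using assms(3) by (simp add: min_vertex_cover_def vertex_cover_def)
  obtain p where p: "p \<in> V" "{x0, p} \<in> E" "degree E p = 1" using assms(5) by blast
  have nb: "{u. {u, p} \<in> E} = {x0}"
  proof -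
    have "card {u. {u, p} \<in> E} = 1" using p(3) by (simp add: degree_def)
    then obtain w where w: "{u. {u, p} \<in> E} = {w}" by (auto simp: card_Suc_eq)
    moreover have "x0 \<in> {u. {u, p} \<in> E}" using p(2) by simp
    ultimately show ?thesis by auto
  qed
  hence deg: "\<And>u. {u, p} \<in> E \<Longrightarrow> u = x0" by blast
  have edge2: "\<exists>u. e = {u, p} \<and> u \<noteq> p" if "e \<in> E" "p \<in> e" for e
  proof -
    have "card e = 2" using sg that by blast
    then obtain a b where "e = {a,b}" "a \<noteq> b" by (auto simp: card_2_iff)
    with that(2) show ?thesis by (auto simp: insert_commute)
  qed
  have finX: "finite X" using XV finV finite_subset by blast
  have pX: "p \<notin> X"
  proof
    assume pX: "p \<in> X"
    have "vertex_cover V E (X - {p})"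
      unfolding vertex_cover_def
    proof (intro conjI ballI)
      show "X - {p} \<subseteq> V" using XV by blast
      fix e assume e: "e \<in> E"
      have ne: "e \<inter> X \<noteq> {}" using assms(3) e by (simp add: min_vertex_cover_def vertex_cover_def)
      show "e \<inter> (X - {p}) \<noteq> {}"
      proof (cases "p \<in> e")
        case True
        then obtain u where "e = {u, p}" "u \<noteq> p" using edge2 e by blast
        with deg e assms(4) show ?thesis by auto
      next
        case False then show ?thesis using ne by blast
      qed
    qed
    hence "card X \<le> card (X - {p})" using assms(3) by (simp add: min_vertex_cover_def)
    moreover have "card (X - {p}) < card X" using pX finX by (metis card_Diff1_less)
    ultimately show False by simp
  qed
  define S where "S = (X - Xs) \<union> Ys"
  have x0S: "x0 \<notin> S" using True assms(7) assms(4) by (auto simp: S_def)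
  have pS: "p \<in> S"
  proof -
    have "{x0, p} \<inter> S \<noteq> {}" using assms(8) p(2) unfolding vertex_cover_def S_def by blast
    thus ?thesis using x0S by auto
  qed
  have pYs: "p \<in> Ys" using pS pX by (auto simp: S_def)
  have SV: "S \<subseteq> V" using assms(8) by (simp add: vertex_cover_def S_def)
  have finS: "finite S" using SV finV finite_subset by blast
  define Xs' where "Xs' = Xs - {x0}"
  define Ys' where "Ys' = Ys - {p}"
  have S'eq: "(X - Xs') \<union> Ys' = (S - {p}) \<union> {x0}"
    using assms(4) pX True assms(7) by (auto simp: S_def Xs'_def Ys'_def)
  have finXs: "finite Xs" using assms(6) finX finite_subset by blast
  have finYs: "finite Ys" using assms(7) finV finite_subset by blast
  have cXs: "card Xs' = card Xs - 1" using True finXs by (simp add: Xs'_def)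
  have cYs: "card Ys' = card Ys - 1" using pYs finYs by (simp add: Ys'_def)
  have pos1: "card Xs \<ge> 1" using True finXs by (metis One_nat_def Suc_leI card_gt_0_iff empty_iff)
  have pos2: "card Ys \<ge> 1" using pYs finYs by (metis One_nat_def Suc_leI card_gt_0_iff empty_iff)
  have cardS: "card ((S - {p}) \<union> {x0}) = card S"
    using finS pS x0S by (simp add: card_Diff1_less) (metis Suc_pred card_Diff1_less card_gt_0_iff empty_iff finite_Diff)
  have vc: "vertex_cover V E ((S - {p}) \<union> {x0})"
    unfolding vertex_cover_def
  proof (intro conjI ballI)
    show "(S - {p}) \<union> {x0} \<subseteq> V" using SV XV assms(4) by blast
    fix e assume e: "e \<in> E"
    have ne: "e \<inter> S \<noteq> {}" using assms(8) e by (simp add: vertex_cover_def S_def)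
    show "e \<inter> ((S - {p}) \<union> {x0}) \<noteq> {}"
    proof (cases "p \<in> e")
      case True
      then obtain u where "e = {u, p}" "u \<noteq> p" using edge2 e by blast
      with deg e show ?thesis by auto
    next
      case False then show ?thesis using ne by blast
    qed
  qed
  have "num_components E ((S - {p}) \<union> {x0}) \<le> num_components E S"
    using comp_le[OF finS pS x0S deg] .
  hence "rank_of E S \<le> rank_of E ((S - {p}) \<union> {x0})"
    unfolding rank_of_def cardS by simp
  hence rk: "int (rank_of E ((X - Xs') \<union> Ys')) \<ge> l" using assms(9) S'eq by (simp add: S_def)
  have "int (card Ys') - int (card Xs') \<le> l - d" using cXs cYs pos1 pos2 assms(10) by simp
  moreover have "Xs' \<subseteq> X" "Ys' \<subseteq> V - X" "x0 \<notin> Xs'" using assms(6,7) by (auto simp: Xs'_def Ys'_def)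
  ultimately show ?thesis using rk vc S'eq by metis
qed

end
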